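(* Let $X$ be a topological space with $|X| \ge 3$. For each $i \in \{0,1,2,3,3\tfrac12,5,6\}$, $X$ is a $T_i$-space if and only if every card of $X$ is a $T_i$-space. Consequently, for these $i$, if $Z$ is a reconstruction of $X$ then $X$ is $T_i$ if and only if $Z$ is $T_i$. Moreover, if every card of $X$ is $T_3$ and at least one card of $X$ is $T_4$, then $X$ is $T_4$.
   Context: For a topological space $X$ and $x \in X$, the set $X\setminus\{x\}$ carries the subspace topology. A card of $X$ is a space homeomorphic to $X \setminus \{x\}$ for some $x \in X$. The deck of $X$ is $\mathcal{D}(X)=\{[X\setminus\{x\}]_\sim : x \in X\}$, where $[Y]_\sim$ denotes the homeomorphism class of $Y$. A space $Z$ is a reconstruction of $X$ if $\mathcal{D}(Z)=\mathcal{D}(X)$. Separation axioms include the lower ones: $T_3$ means regular and $T_1$; $T_{3\frac12}$ (Tychonoff) means completely regular and $T_1$; $T_4$ means normal and $T_1$; $T_5$ means every subspace is $T_4$; $T_6$ means $T_4$ and every closed set is a $G_\delta$-set. *)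

theory Defs
  imports "HOL-Analysis.Analysis"
begin

datatype sep_index = T0 | T1 | T2 | T3 | T3half | T4 | T5 | T6

definition T4_space :: "'a topology \<Rightarrow> bool" where
  "T4_space X \<longleftrightarrow> normal_space X \<and> t1_space X"

fun sep_axiom :: "sep_index \<Rightarrow> 'a topology \<Rightarrow> bool" where
  "sep_axiom T0 X = t0_space X"
| "sep_axiom T1 X = t1_space X"
| "sep_axiom T2 X = Hausdorff_space X"
| "sep_axiom T3 X = (regular_space X \<and> t1_space X)"
| "sep_axiom T3half X = (completely_regular_space X \<and> t1_space X)"
| "sep_axiom T4 X = T4_space X"
| "sep_axiom T5 X = (\<forall>S \<subseteq> topspace X. T4_space (subtopology X S))"
| "sep_axiom T6 X = (T4_space X \<and> (\<forall>C. closedin X C \<longrightarrow> gdelta_in X C))"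

definition card_del :: "'a topology \<Rightarrow> 'a \<Rightarrow> 'a topology" where
  "card_del X x = subtopology X (topspace X - {x})"

text \<open>Equality of decks: the sets of homeomorphism classes of cards coincide.\<close>
definition same_deck :: "'a topology \<Rightarrow> 'b topology \<Rightarrow> bool" where
  "same_deck X Z \<longleftrightarrow>
     (\<forall>x\<in>topspace X. \<exists>z\<in>topspace Z. card_del X x homeomorphic_space card_del Z z) \<and>
     (\<forall>z\<in>topspace Z. \<exists>x\<in>topspace X. card_del Z z homeomorphic_space card_del X x)"

end

theory Submission
  imports Defs
begin

definition three :: "'a topology \<Rightarrow> bool" where
  "three X \<longleftrightarrow> (\<forall>x y. \<exists>z\<in>topspace X. z \<noteq> x \<and> z \<noteq> y)"

lemma three_from_card:
  assumes "infinite (topspace X) \<or> card (topspace X) \<ge> 3"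
  shows "three X"
proof -
  obtain B where B: "B \<subseteq> topspace X" "card B = 3" "finite B"
  proof (cases "infinite (topspace X)")
    case True
    then obtain T where "finite T" "card T = 3" "T \<subseteq> topspace X"
      using infinite_arbitrarily_large by blast
    then show ?thesis using that by blast
  next
    case False
    then have "3 \<le> card (topspace X)" using assms by auto
    then obtain T where "T \<subseteq> topspace X" "card T = 3" "finite T"
      by (rule obtain_subset_with_card_n)
    then show ?thesis using that by blast
  qed
  then obtain a b c where abc: "B = {a,b,c}" "a\<noteq>b" "b\<noteq>c" "a\<noteq>c"
    by (metis card_3_iff)
  show ?thesis unfolding three_def
  proof (intro allI)
    fix x y
    show "\<exists>z\<in>topspace X. z \<noteq> x \<and> z \<noteq> y"
    proof (cases "a \<noteq> x \<and> a \<noteq> y")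
      case True then show ?thesis using abc B by blast
    next
      case F1: False
      show ?thesis
      proof (cases "b \<noteq> x \<and> b \<noteq> y")
        case True then show ?thesis using abc B by blast
      next
        case False then show ?thesis using F1 abc B by auto
      qed
    qed
  qed
qed

lemma topspace_card_del [simp]: "topspace (card_del X x) = topspace X - {x}"
  by (auto simp: card_del_def)

lemma card_open: "t1_space X \<Longrightarrow> openin X (topspace X - {z})"
  unfolding t1_space_openin_delete_alt by simp

lemma open_card:
  assumes "t1_space X" "openin (card_del X z) U"
  shows "openin X U"
proof -
  have "openin X (topspace X - {z})" by (rule card_open[OF assms(1)])
  then show ?thesis using assms(2) unfolding card_del_def by (simp add: openin_open_subtopology)
qed

lemma closed_card2:
  assumes "closedin X C" "u \<notin> C"
  shows "closedin (card_del X u) C"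
proof -
  have eq: "C = C \<inter> (topspace X - {u})" using closedin_subset[OF assms(1)] assms(2) by blast
  show ?thesis unfolding card_del_def closedin_subtopology by (rule exI[of _ C], rule conjI[OF assms(1) eq])
qed

lemma closed_card:
  assumes "closedin X C"
  shows "closedin (card_del X u) (C - {u})"
proof -
  have eq: "C - {u} = C \<inter> (topspace X - {u})" using closedin_subset[OF assms] by blast
  show ?thesis unfolding card_del_def closedin_subtopology by (rule exI[of _ C], rule conjI[OF assms eq])
qed

lemma back_t0:
  assumes "three X" "\<forall>z\<in>topspace X. t0_space (card_del X z)"
  shows "t0_space X"
  unfolding t0_space_def
proof (intro ballI impI)
  fix x y assume xy: "x \<in> topspace X" "y \<in> topspace X" "x \<noteq> y"
  obtain z where z: "z \<in> topspace X" "z \<noteq> x" "z \<noteq> y" using assms(1) unfolding three_def by blast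
  have t: "t0_space (card_del X z)" using assms z by blast
  have tx: "x \<in> topspace (card_del X z)" "y \<in> topspace (card_del X z)" using xy z by auto
  obtain U where U: "openin (card_del X z) U" "x \<notin> U \<longleftrightarrow> y \<in> U"
    using t tx xy(3) unfolding t0_space_def by blast
  then obtain V where "openin X V" "U = V \<inter> (topspace X - {z})"
    unfolding card_del_def openin_subtopology by blast
  then show "\<exists>U. openin X U \<and> (x \<notin> U \<longleftrightarrow> y \<in> U)" using U xy z by blast
qed

lemma back_t1:
  assumes "three X" "\<forall>z\<in>topspace X. t1_space (card_del X z)"
  shows "t1_space X"
  unfolding t1_space_def
proof (intro ballI impI)
  fix x y assume xy: "x \<in> topspace X" "y \<in> topspace X" "x \<noteq> y"
  obtain z where z: "z \<in> topspace X" "z \<noteq> x" "z \<noteq> y" using assms(1) unfolding three_def by blast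
  have t: "t1_space (card_del X z)" using assms z by blast
  have tx: "x \<in> topspace (card_del X z)" "y \<in> topspace (card_del X z)" using xy z by auto
  obtain U where U: "openin (card_del X z) U" "x \<in> U" "y \<notin> U"
    using t tx xy(3) unfolding t1_space_def by blast
  then obtain V where "openin X V" "U = V \<inter> (topspace X - {z})"
    unfolding card_del_def openin_subtopology by blast
  then show "\<exists>U. openin X U \<and> x \<in> U \<and> y \<notin> U" using U xy z by blast
qed

lemma back_t2:
  assumes "three X" "\<forall>z\<in>topspace X. Hausdorff_space (card_del X z)"
  shows "Hausdorff_space X"
  unfolding Hausdorff_space_def
proof (intro allI impI)
  fix x y assume xy: "x \<in> topspace X \<and> y \<in> topspace X \<and> x \<noteq> y"
  obtain z where z: "z \<in> topspace X" "z \<noteq> x" "z \<noteq> y" using assms(1) unfolding three_def by blast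
  have t: "Hausdorff_space (card_del X z)" using assms z by blast
  have tx: "x \<in> topspace (card_del X z)" "y \<in> topspace (card_del X z)" using xy z by auto
  obtain U W where U: "openin (card_del X z) U" "openin (card_del X z) W" "x \<in> U" "y \<in> W" "disjnt U W"
    using t tx xy unfolding Hausdorff_space_def by blast
  obtain V where V: "openin X V" "U = V \<inter> (topspace X - {z})"
    using U unfolding card_del_def openin_subtopology by blast
  obtain V' where V': "openin X V'" "W = V' \<inter> (topspace X - {z})"
    using U unfolding card_del_def openin_subtopology by blast
  have "openin X (topspace X - {z})"
  proof -
    have "t1_space X"
      using back_t1[OF assms(1)] assms(2) Hausdorff_imp_t1_space by blast
    then show ?thesis by (rule card_open)
  qed
  then have "openin X U" "openin X W" using U V V' by (auto intro: openin_Int)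
  then show "\<exists>U V. openin X U \<and> openin X V \<and> x \<in> U \<and> y \<in> V \<and> disjnt U V"
    using U by blast
qed

lemma back_reg:
  assumes "three X" "t1_space X" "\<forall>z\<in>topspace X. regular_space (card_del X z)"
  shows "regular_space X"
  unfolding regular_space_def
proof (intro allI impI)
  fix C a assume Ca: "closedin X C \<and> a \<in> topspace X - C"
  have CX: "C \<subseteq> topspace X" using Ca closedin_subset by blast
  obtain z where z: "z \<in> topspace X" "z \<noteq> a" using assms(1) unfolding three_def by blast
  obtain w where w: "w \<in> topspace X" "w \<noteq> a" "w \<noteq> z" using assms(1) unfolding three_def by blast
  have sep: "\<exists>U V. openin X U \<and> openin X V \<and> a \<in> U \<and> C - {u} \<subseteq> V \<and> disjnt U V"
    if "u \<in> topspace X" "u \<noteq> a" for u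
  proof -
    have r: "regular_space (card_del X u)" by (rule bspec[OF assms(3) that(1)])
    have cl: "closedin (card_del X u) (C - {u})" using Ca by (intro closed_card) simp
    have am: "a \<in> topspace (card_del X u) - (C - {u})" using Ca that by simp
    obtain U V where "openin (card_del X u) U" "openin (card_del X u) V" "a \<in> U" "C - {u} \<subseteq> V" "disjnt U V"
      using r[unfolded regular_space_def, rule_format, OF conjI[OF cl am]] by blast
    then show ?thesis using open_card[OF assms(2)] by blast
  qed
  obtain U1 V1 where 1: "openin X U1" "openin X V1" "a \<in> U1" "C - {z} \<subseteq> V1" "disjnt U1 V1"
    using sep z by blast
  obtain U2 V2 where 2: "openin X U2" "openin X V2" "a \<in> U2" "C - {w} \<subseteq> V2" "disjnt U2 V2"
    using sep w by blast
  show "\<exists>U V. openin X U \<and> openin X V \<and> a \<in> U \<and> C \<subseteq> V \<and> disjnt U V"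
  proof (intro exI conjI)
    show "openin X (U1 \<inter> U2)" using 1(1) 2(1) by (rule openin_Int)
    show "openin X (V1 \<union> V2)" using 1(2) 2(2) by (rule openin_Un)
    show "a \<in> U1 \<inter> U2" using 1(3) 2(3) by simp
    show "C \<subseteq> V1 \<union> V2" using 1(4) 2(4) w(3) by blast
    show "disjnt (U1 \<inter> U2) (V1 \<union> V2)" using 1(5) 2(5) by (auto simp: disjnt_def)
  qed
qed

lemma back_cr:
  assumes "three X" "t1_space X" "regular_space X"
    "\<forall>z\<in>topspace X. completely_regular_space (card_del X z)"
  shows "completely_regular_space X"
  unfolding completely_regular_space_def
proof (intro allI impI)
  fix C x assume Cx: "closedin X C \<and> x \<in> topspace X - C"
  have CX: "C \<subseteq> topspace X" using Cx closedin_subset by blast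
  obtain z where z: "z \<in> topspace X" "z \<noteq> x" using assms(1) unfolding three_def by blast
  have cz: "closedin X {z}" by (rule closedin_t1_singleton[OF assms(2) z(1)])
  have cl: "closedin X (C \<union> {z})" by (rule closedin_Un) (use Cx cz in auto)
  have xm: "x \<in> topspace X - (C \<union> {z})" using Cx z by auto
  obtain U V where UV: "openin X U" "openin X V" "x \<in> U" "C \<union> {z} \<subseteq> V" "disjnt U V"
    using assms(3)[unfolded regular_space_def, rule_format, OF conjI[OF cl xm]] by blast
  define D where "D = (topspace X - U) - {z}"
  have "closedin X (topspace X - U)" using UV(1) by (simp add: closedin_diff)
  then have "closedin (card_del X z) D" unfolding D_def by (rule closed_card)
  moreover have "x \<in> topspace (card_del X z) - D" using UV Cx z by (auto simp: D_def)
  ultimately have cd: "closedin (card_del X z) D \<and> x \<in> topspace (card_del X z) - D" by (rule conjI)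
  have crz: "completely_regular_space (card_del X z)" by (rule bspec[OF assms(4) z(1)])
  obtain g :: "'a \<Rightarrow> real" where g: "continuous_map (card_del X z) (top_of_set {0..1}) g"
     "g x = 0" "g ` D \<subseteq> {1}"
    using crz[unfolded completely_regular_space_def, rule_format, OF cd] by blast
  define f where "f y = (if y = z then 1 else g y)" for y
  have cf: "continuous_map X (top_of_set {0..1::real}) f"
  proof (rule pasting_lemma[where I="{True,False}" and T="\<lambda>b. if b then topspace X - {z} else V"
        and f="\<lambda>b. f" and g=f])
    fix i assume "i \<in> {True, False}"
    then show "openin X (if i then topspace X - {z} else V)"
      using card_open[OF assms(2)] UV by auto
  next
    fix i assume "i \<in> {True, False}"
    show "continuous_map (subtopology X (if i then topspace X - {z} else V)) (top_of_set {0..1}) f"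
    proof (cases i)
      case True
      have "continuous_map (subtopology X (topspace X - {z})) (top_of_set {0..1}) f"
        by (rule continuous_map_eq[OF g(1)[unfolded card_del_def]]) (auto simp: f_def)
      then show ?thesis using True by simp
    next
      case False
      have "continuous_map (subtopology X V) (top_of_set {0..1::real}) (\<lambda>y. 1)" by simp
      then have "continuous_map (subtopology X V) (top_of_set {0..1::real}) f"
      proof (rule continuous_map_eq)
        fix y assume y: "y \<in> topspace (subtopology X V)"
        show "1 = f y"
        proof (cases "y = z")
          case True then show ?thesis by (simp add: f_def)
        next
          case False
          then have "y \<in> D" using y UV by (auto simp: D_def disjnt_def)
          then show ?thesis using g(3) False by (auto simp: f_def)
        qed
      qed
      then show ?thesis using False by simp
    qed
  next
    fix y assume "y \<in> topspace X"
    then show "\<exists>j. j \<in> {True, False} \<and> y \<in> (if j then topspace X - {z} else V) \<and> f y = f y"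
    proof (cases "y = z")
      case True then show ?thesis using UV(4) by (intro exI[of _ False]) auto
    next
      case False then show ?thesis using \<open>y \<in> topspace X\<close> by (intro exI[of _ True]) auto
    qed
  qed simp
  have "f ` C \<subseteq> {1}"
  proof
    fix v assume "v \<in> f ` C"
    then obtain c where c: "c \<in> C" "v = f c" by blast
    show "v \<in> {1}"
    proof (cases "c = z")
      case True then show ?thesis using c by (simp add: f_def)
    next
      case False
      then have "c \<in> D" using c UV CX by (auto simp: D_def disjnt_def)
      then show ?thesis using g(3) False c by (auto simp: f_def)
    qed
  qed
  moreover have "f x = 0" using g z by (simp add: f_def)
  ultimately show "\<exists>f::'a\<Rightarrow>real. continuous_map X (top_of_set {0..1}) f \<and> f x = 0 \<and> f ` C \<subseteq> {1}"
    using cf by blast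
qed

lemma back_norm:
  assumes "t1_space X" "regular_space X" "z \<in> topspace X" "normal_space (card_del X z)"
  shows "normal_space X"
proof -
  have key: "\<exists>U V. openin X U \<and> openin X V \<and> A \<subseteq> U \<and> B \<subseteq> V \<and> disjnt U V"
    if AB: "closedin X A" "closedin X B" "disjnt A B" "z \<notin> B" for A B
  proof -
    have zB: "closedin X B \<and> z \<in> topspace X - B" using AB assms(3) by simp
    obtain U0 V0 where U0: "openin X U0" "openin X V0" "z \<in> U0" "B \<subseteq> V0" "disjnt U0 V0"
      using assms(2)[unfolded regular_space_def, rule_format, OF zB] by blast
    have AX: "A \<subseteq> topspace X" "B \<subseteq> topspace X" using AB closedin_subset by auto
    have "closedin X (A - U0)" using AB U0 by (simp add: closedin_diff)
    then have cA: "closedin (card_del X z) (A - U0)" by (rule closed_card2) (use U0(3) in simp)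
    have cB: "closedin (card_del X z) B" by (rule closed_card2[OF AB(2) AB(4)])
    have "disjnt (A - U0) B" using AB(3) by (auto simp: disjnt_def)
    then have abd: "closedin (card_del X z) (A - U0) \<and> closedin (card_del X z) B \<and> disjnt (A - U0) B"
      using cA cB by simp
    obtain U' V' where UV': "openin (card_del X z) U'" "openin (card_del X z) V'"
        "A - U0 \<subseteq> U'" "B \<subseteq> V'" "disjnt U' V'"
      using assms(4)[unfolded normal_space_def, rule_format, OF abd] by blast
    have o: "openin X U'" "openin X V'" using UV' open_card[OF assms(1)] by auto
    have "openin X (U' \<union> U0)" using o U0 by (simp add: openin_Un)
    moreover have "openin X (V' \<inter> V0)" using o U0 by (simp add: openin_Int)
    moreover have "A \<subseteq> U' \<union> U0" "B \<subseteq> V' \<inter> V0" using UV' U0 by auto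
    moreover have "disjnt (U' \<union> U0) (V' \<inter> V0)" using UV' U0 by (auto simp: disjnt_def)
    ultimately show ?thesis by blast
  qed
  show ?thesis unfolding normal_space_def
  proof (intro allI impI)
    fix S T assume H: "closedin X S \<and> closedin X T \<and> disjnt S T"
    show "\<exists>U V. openin X U \<and> openin X V \<and> S \<subseteq> U \<and> T \<subseteq> V \<and> disjnt U V"
    proof (cases "z \<in> T")
      case False
      have "closedin X S" "closedin X T" "disjnt S T" using H by auto
      then show ?thesis using key[of S T] False by simp
    next
      case True then have "z \<notin> S" using H by (auto simp: disjnt_def)
      have "closedin X S" "closedin X T" "disjnt T S" using H by (auto simp: disjnt_sym)
      then obtain U V where "openin X U" "openin X V" "T \<subseteq> U" "S \<subseteq> V" "disjnt U V"
        using key[of T S] \<open>z \<notin> S\<close> by auto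
      then show ?thesis by (meson disjnt_sym)
    qed
  qed
qed

lemma T4_from_cards:
  assumes "three X" "\<forall>z\<in>topspace X. T4_space (card_del X z)"
  shows "T4_space X"
proof -
  have t1: "t1_space X" using back_t1[OF assms(1)] assms(2) by (auto simp: T4_space_def)
  have reg: "regular_space X"
    using back_reg[OF assms(1) t1] assms(2) normal_t1_imp_regular_space by (auto simp: T4_space_def)
  obtain z where "z \<in> topspace X" using assms(1) unfolding three_def by blast
  then have "normal_space X" using back_norm[OF t1 reg] assms(2) by (auto simp: T4_space_def)
  then show ?thesis using t1 by (simp add: T4_space_def)
qed

lemma sub_card:
  assumes "S \<subseteq> topspace X - {x}"
  shows "subtopology (card_del X x) S = subtopology X S"
  using assms by (simp add: card_del_def subtopology_subtopology Int_absorb1)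

lemma fwd:
  assumes "i \<in> {T0, T1, T2, T3, T3half, T5, T6}" "sep_axiom i X" "x \<in> topspace X"
  shows "sep_axiom i (card_del X x)"
proof -
  consider "i = T0" | "i = T1" | "i = T2" | "i = T3" | "i = T3half" | "i = T5" | "i = T6"
    using assms(1) by blast
  then show ?thesis
  proof cases
    case 1 then show ?thesis using assms by (simp add: card_del_def t0_space_subtopology)
  next
    case 2 then show ?thesis using assms by (simp add: card_del_def t1_space_subtopology)
  next
    case 3 then show ?thesis using assms by (simp add: card_del_def Hausdorff_space_subtopology)
  next
    case 4 then show ?thesis using assms
      by (simp add: card_del_def regular_space_subtopology t1_space_subtopology)
  next
    case 5 then show ?thesis using assms
      by (simp add: card_del_def completely_regular_space_subtopology t1_space_subtopology)
  next
    case 6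
    show ?thesis unfolding 6 sep_axiom.simps
    proof (intro allI impI)
      fix S assume "S \<subseteq> topspace (card_del X x)"
      then have "S \<subseteq> topspace X - {x}" by simp
      then have eq: "subtopology (card_del X x) S = subtopology X S" by (rule sub_card)
      have h: "\<forall>S\<subseteq>topspace X. T4_space (subtopology X S)" using assms(2) 6 by simp
      have "S \<subseteq> topspace X" using \<open>S \<subseteq> topspace X - {x}\<close> by blast
      then have "T4_space (subtopology X S)" using h by blast
      then show "T4_space (subtopology (card_del X x) S)" using eq by simp
    qed
  next
    case 7
    have X: "T4_space X" "\<forall>C. closedin X C \<longrightarrow> gdelta_in X C" using assms(2) 7 by auto
    have t1: "t1_space X" using X by (simp add: T4_space_def)
    have "closedin X {x}" by (rule closedin_t1_singleton[OF t1 assms(3)])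
    then have "gdelta_in X {x}" using X(2) by simp
    then have "fsigma_in X (topspace X - {x})"
      by (simp add: fsigma_in_gdelta_in Diff_Diff_Int Int_absorb1 assms(3))
    then have "normal_space (card_del X x)"
      using X normal_space_fsigma_subtopology by (auto simp: T4_space_def card_del_def)
    moreover have "t1_space (card_del X x)"
      using t1 by (simp add: card_del_def t1_space_subtopology)
    moreover have "gdelta_in (card_del X x) D" if "closedin (card_del X x) D" for D
    proof -
      have "\<exists>C. closedin X C \<and> D = C \<inter> (topspace X - {x})"
        using that unfolding card_del_def closedin_subtopology .
      then obtain C where C: "closedin X C \<and> D = C \<inter> (topspace X - {x})" ..
      have "gdelta_in X C" using X(2) C by simp
      then have "gdelta_in X C \<and> D = C \<inter> (topspace X - {x})" using C by simp
      then have "\<exists>T. gdelta_in X T \<and> D = T \<inter> (topspace X - {x})" ..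
      then show ?thesis unfolding card_del_def gdelta_in_subtopology .
    qed
    ultimately show ?thesis using 7 by (simp add: T4_space_def)
  qed
qed

lemma bwd:
  assumes "three X" "i \<in> {T0, T1, T2, T3, T3half, T5, T6}"
    "\<forall>x\<in>topspace X. sep_axiom i (card_del X x)"
  shows "sep_axiom i X"
proof -
  consider "i = T0" | "i = T1" | "i = T2" | "i = T3" | "i = T3half" | "i = T5" | "i = T6"
    using assms(2) by blast
  then show ?thesis
  proof cases
    case 1 then show ?thesis using assms back_t0 by auto
  next
    case 2 then show ?thesis using assms back_t1 by auto
  next
    case 3 then show ?thesis using assms back_t2 by auto
  next
    case 4
    have t1: "t1_space X" using assms back_t1 4 by auto
    then show ?thesis using assms back_reg 4 by auto
  next
    case 5
    have t1: "t1_space X" using assms back_t1 5 by auto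
    have reg: "regular_space X" using assms back_reg[OF assms(1) t1] 5
      completely_regular_imp_regular_space by auto
    then show ?thesis using assms back_cr[OF assms(1) t1 reg] 5 t1 by auto
  next
    case 6
    have cards: "\<forall>z\<in>topspace X. T4_space (card_del X z)"
    proof
      fix z assume "z \<in> topspace X"
      then have "T4_space (subtopology (card_del X z) (topspace (card_del X z)))"
        using assms(3) 6 by auto
      moreover have "subtopology (card_del X z) (topspace (card_del X z)) = card_del X z"
        by (rule subtopology_topspace)
      ultimately show "T4_space (card_del X z)" by simp
    qed
    show ?thesis unfolding 6 sep_axiom.simps
    proof (intro allI impI)
      fix S assume S: "S \<subseteq> topspace X"
      show "T4_space (subtopology X S)"
      proof (cases "S = topspace X")
        case True
        then show ?thesis using T4_from_cards[OF assms(1) cards] by simp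
      next
        case False
        then obtain z where z: "z \<in> topspace X" "z \<notin> S" using S by blast
        then have "S \<subseteq> topspace (card_del X z)" using S by auto
        then have "T4_space (subtopology (card_del X z) S)" using assms(3) 6 z by auto
        moreover have "subtopology (card_del X z) S = subtopology X S"
          by (rule sub_card) (use S z in blast)
        ultimately show ?thesis by simp
      qed
    qed
  next
    case 7
    have cards: "\<forall>z\<in>topspace X. T4_space (card_del X z)" using assms(3) 7 by auto
    have T4: "T4_space X" using T4_from_cards[OF assms(1) cards] .
    have t1: "t1_space X" using T4 by (simp add: T4_space_def)
    have part: "gdelta_in X (C - {z})" if "closedin X C" "z \<in> topspace X" for C z
    proof -
      have cc: "closedin (card_del X z) (C - {z})" by (rule closed_card[OF that(1)])
      have "sep_axiom T6 (card_del X z)" using assms(3) 7 that(2) by blast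
      then have "\<forall>C. closedin (card_del X z) C \<longrightarrow> gdelta_in (card_del X z) C" by simp
      then have "gdelta_in (card_del X z) (C - {z})" using cc by blast
      then have "\<exists>T. gdelta_in X T \<and> C - {z} = T \<inter> (topspace X - {z})"
        unfolding card_del_def gdelta_in_subtopology .
      then obtain T where T: "gdelta_in X T \<and> C - {z} = T \<inter> (topspace X - {z})" ..
      have "gdelta_in X (topspace X - {z})" by (rule open_imp_gdelta_in[OF card_open[OF t1]])
      then have "gdelta_in X (T \<inter> (topspace X - {z}))" using T by (simp add: gdelta_in_Int)
      then show ?thesis using T by simp
    qed
    have "gdelta_in X C" if "closedin X C" for C
    proof -
      obtain z where z: "z \<in> topspace X" using assms(1) unfolding three_def by blast
      obtain w where w: "w \<in> topspace X" "w \<noteq> z" using assms(1) unfolding three_def by blast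
      have eq: "(C - {z}) \<union> (C - {w}) = C" using w by auto
      have "gdelta_in X ((C - {z}) \<union> (C - {w}))"
        by (rule gdelta_in_Un[OF part[OF that z] part[OF that w(1)]])
      then show ?thesis using eq by simp
    qed
    then show ?thesis using T4 7 by simp
  qed
qed

lemma T5_iff: "sep_axiom T5 X \<longleftrightarrow> hereditarily normal_space X \<and> t1_space X"
proof
  assume H: "sep_axiom T5 X"
  then have h: "\<forall>S\<subseteq>topspace X. T4_space (subtopology X S)" by simp
  then have "T4_space (subtopology X (topspace X))" by blast
  then have "T4_space X" by simp
  then have "t1_space X" by (simp add: T4_space_def)
  then show "hereditarily normal_space X \<and> t1_space X"
    using H by (simp add: hereditarily_def T4_space_def)
next
  assume "hereditarily normal_space X \<and> t1_space X"
  then show "sep_axiom T5 X"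
    by (simp add: hereditarily_def T4_space_def t1_space_subtopology)
qed

lemma inv_axiom:
  assumes "X homeomorphic_space Y" "sep_axiom i X"
  shows "sep_axiom i Y"
proof (cases i)
  case T0 then show ?thesis using assms homeomorphic_t0_space by auto
next
  case T1 then show ?thesis using assms homeomorphic_t1_space by auto
next
  case T2 then show ?thesis using assms homeomorphic_Hausdorff_space by auto
next
  case T3 then show ?thesis using assms homeomorphic_t1_space homeomorphic_regular_space by auto
next
  case T3half then show ?thesis
    using assms homeomorphic_t1_space homeomorphic_completely_regular_space by auto
next
  case T4 then show ?thesis
    using assms homeomorphic_t1_space homeomorphic_normal_space by (auto simp: T4_space_def)
next
  case T5 then show ?thesis
    using assms homeomorphic_t1_space homeomorphic_hereditarily_normal_space T5_iff by metis
next
  case T6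
  have T4Y: "T4_space Y"
    using assms T6 homeomorphic_t1_space homeomorphic_normal_space by (auto simp: T4_space_def)
  obtain f where f: "homeomorphic_map X Y f"
    using assms(1) homeomorphic_maps_map homeomorphic_space_def by metis
  have "gdelta_in Y C" if C: "closedin Y C" for C
  proof -
    define D where "D = {x \<in> topspace X. f x \<in> C}"
    have "closedin X D" unfolding D_def
      using closedin_continuous_map_preimage homeomorphic_imp_continuous_map f C by blast
    then have "gdelta_in X D" using assms(2) T6 by auto
    moreover have "f ` D = C"
      using homeomorphic_imp_surjective_map[OF f] closedin_subset[OF C] by (auto simp: D_def)
    moreover have "D \<subseteq> topspace X" by (auto simp: D_def)
    ultimately show ?thesis using homeomorphic_map_gdeltaness[OF f] by metis
  qed
  then show ?thesis using T4Y T6 by simp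
qed

lemma deck_three:
  assumes "three X" "same_deck Z X"
  shows "three Z"
proof -
  obtain x where x: "x \<in> topspace X" using assms(1) unfolding three_def by blast
  obtain z where z: "z \<in> topspace Z" "card_del X x homeomorphic_space card_del Z z"
    using assms(2) x unfolding same_deck_def by blast
  obtain f where f: "homeomorphic_map (card_del X x) (card_del Z z) f"
    using z(2) homeomorphic_maps_map homeomorphic_space_def by metis
  obtain p where p: "p \<in> topspace X" "p \<noteq> x" using assms(1) unfolding three_def by blast
  obtain q where q: "q \<in> topspace X" "q \<noteq> x" "q \<noteq> p" using assms(1) unfolding three_def by blast
  have sur: "f ` (topspace X - {x}) = topspace Z - {z}"
    using homeomorphic_imp_surjective_map[OF f] by simp
  have inj: "inj_on f (topspace X - {x})"
    using homeomorphic_imp_injective_map[OF f] by simp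
  have fp: "f p \<in> topspace Z - {z}" "f q \<in> topspace Z - {z}" using sur p q by auto
  have ne: "f p \<noteq> f q" using inj p q by (auto dest: inj_onD)
  show ?thesis unfolding three_def
  proof (intro allI)
    fix a b
    show "\<exists>c\<in>topspace Z. c \<noteq> a \<and> c \<noteq> b"
    proof (cases "z \<noteq> a \<and> z \<noteq> b")
      case True then show ?thesis using z(1) by blast
    next
      case F1: False
      show ?thesis
      proof (cases "f p \<noteq> a \<and> f p \<noteq> b")
        case True then show ?thesis using fp by blast
      next
        case False
        then have "f q \<noteq> a \<and> f q \<noteq> b" using F1 ne fp by auto
        then show ?thesis using fp by blast
      qed
    qed
  qed
qed

theorem theorem3p1:
  fixes X :: "'a topology"
  assumes "infinite (topspace X) \<or> card (topspace X) \<ge> 3"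
  shows "(\<forall>i\<in>{T0, T1, T2, T3, T3half, T5, T6}.
            sep_axiom i X \<longleftrightarrow> (\<forall>x\<in>topspace X. sep_axiom i (card_del X x)))
       \<and> (\<forall>Z :: 'b topology. same_deck Z X \<longrightarrow>
            (\<forall>i\<in>{T0, T1, T2, T3, T3half, T5, T6}. sep_axiom i X \<longleftrightarrow> sep_axiom i Z))
       \<and> ((\<forall>x\<in>topspace X. sep_axiom T3 (card_del X x))
            \<and> (\<exists>x\<in>topspace X. sep_axiom T4 (card_del X x))
            \<longrightarrow> sep_axiom T4 X)"
proof -
  have th: "three X" using three_from_card[OF assms] .
  have P1: "sep_axiom i X \<longleftrightarrow> (\<forall>x\<in>topspace X. sep_axiom i (card_del X x))"
    if i: "i \<in> {T0, T1, T2, T3, T3half, T5, T6}" for i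
  proof
    assume a: "sep_axiom i X"
    show "\<forall>x\<in>topspace X. sep_axiom i (card_del X x)"
    proof
      fix x assume "x \<in> topspace X"
      then show "sep_axiom i (card_del X x)" by (rule fwd[OF i a])
    qed
  next
    assume "\<forall>x\<in>topspace X. sep_axiom i (card_del X x)"
    then show "sep_axiom i X" by (rule bwd[OF th i])
  qed
  have P2: "sep_axiom i X \<longleftrightarrow> sep_axiom i Z"
    if Z: "same_deck Z X" and i: "i \<in> {T0, T1, T2, T3, T3half, T5, T6}" for Z :: "'b topology" and i
  proof -
    have thZ: "three Z" using deck_three[OF th Z] .
    have PZ: "sep_axiom i Z \<longleftrightarrow> (\<forall>z\<in>topspace Z. sep_axiom i (card_del Z z))"
    proof
      assume a: "sep_axiom i Z"
      show "\<forall>z\<in>topspace Z. sep_axiom i (card_del Z z)"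
      proof
        fix z assume "z \<in> topspace Z"
        then show "sep_axiom i (card_del Z z)" by (rule fwd[OF i a])
      qed
    next
      assume "\<forall>z\<in>topspace Z. sep_axiom i (card_del Z z)"
      then show "sep_axiom i Z" by (rule bwd[OF thZ i])
    qed
    have "(\<forall>x\<in>topspace X. sep_axiom i (card_del X x)) \<longleftrightarrow> (\<forall>z\<in>topspace Z. sep_axiom i (card_del Z z))"
    proof
      assume H: "\<forall>x\<in>topspace X. sep_axiom i (card_del X x)"
      show "\<forall>z\<in>topspace Z. sep_axiom i (card_del Z z)"
      proof
        fix z assume "z \<in> topspace Z"
        then obtain x where x: "x \<in> topspace X" "card_del Z z homeomorphic_space card_del X x"
          using Z unfolding same_deck_def by blast
        have "sep_axiom i (card_del X x)" using H x(1) by blast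
        moreover have "card_del X x homeomorphic_space card_del Z z"
          by (rule homeomorphic_space_sym[THEN iffD1, OF x(2)])
        ultimately show "sep_axiom i (card_del Z z)" by (rule inv_axiom[rotated])
      qed
    next
      assume H: "\<forall>z\<in>topspace Z. sep_axiom i (card_del Z z)"
      show "\<forall>x\<in>topspace X. sep_axiom i (card_del X x)"
      proof
        fix x assume "x \<in> topspace X"
        then obtain z where z: "z \<in> topspace Z" "card_del X x homeomorphic_space card_del Z z"
          using Z unfolding same_deck_def by blast
        have "sep_axiom i (card_del Z z)" using H z(1) by blast
        moreover have "card_del Z z homeomorphic_space card_del X x"
          by (rule homeomorphic_space_sym[THEN iffD1, OF z(2)])
        ultimately show "sep_axiom i (card_del X x)" by (rule inv_axiom[rotated])
      qed
    qed
    then show ?thesis using P1[OF i] PZ by simp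
  qed
  have P3: "sep_axiom T4 X" if H: "(\<forall>x\<in>topspace X. sep_axiom T3 (card_del X x))
            \<and> (\<exists>x\<in>topspace X. sep_axiom T4 (card_del X x))"
  proof -
    have h3: "\<forall>x\<in>topspace X. t1_space (card_del X x) \<and> regular_space (card_del X x)"
      using H by simp
    have t1: "t1_space X" using back_t1[OF th] h3 by blast
    have reg: "regular_space X" using back_reg[OF th t1] h3 by blast
    obtain z where z: "z \<in> topspace X" "T4_space (card_del X z)" using H by auto
    then have "normal_space X" using back_norm[OF t1 reg z(1)] by (simp add: T4_space_def)
    then show ?thesis using t1 by (simp add: T4_space_def)
  qed
  show ?thesis using P1 P2 P3 by blast
qed

end
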